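(* Consider the troll-farm voting model described in the context, and let $x\in(0,\tfrac12)\cup(\tfrac12,1)$. The sender's optimal choice $(\alpha_x,\tilde F_x)$ for voters of type $x$ is unique and is as follows. (i) If $x\in(0,\tfrac12)$: the mass of trolls is $\alpha_x=\dfrac{\kappa_x[s^*(x)]}{\kappa_x[s^*(x)]+1}$ and the density of trolls' messages is $$\tilde f_x(s)=\begin{cases}\dfrac{1-\alpha_x}{\alpha_x}\,\kappa_x'(s) & \text{if } s<s^*(x),\\[1mm] 0 & \text{if } s\ge s^*(x),\end{cases}$$ and under this choice $\pi_x(s)=x$ for all $s\le s^*(x)$. (ii) If $x\in(\tfrac12,1)$: the mass of trolls is $\alpha_x=\dfrac{\kappa_x[s^*(x)]+1}{\kappa_x[s^*(x)]}$ and the density of trolls' messages is $$\tilde f_x(s)=\begin{cases}0 & \text{if } s<s^*(x),\\[1mm] \dfrac{1-\alpha_x}{\alpha_x}\,\kappa_x'(s) & \text{if } s\ge s^*(x),\end{cases}$$ and under this choice $\pi_x(s)=x$ for all $s\ge s^*(x)$.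
   Context: Model. There is an unknown state $\theta\in\{0,1\}$, each state having prior probability $\tfrac12$. There is a continuum of voters of mass one; each voter has a type $x\in\mathbb{R}$, types being distributed according to a cdf $H$ with density $h$ having full support on $\mathbb{R}$. A voter of type $x$ who votes for the government receives payoff $1-x$ if $\theta=1$ and $-x$ if $\theta=0$; voting against gives payoff $0$. In state $\theta$, each voter independently draws an informative signal $s\in\mathbb{R}$ from a cdf $F_\theta$ with density $f_\theta$ having full support on $\mathbb{R}$, where $f_0(0)=f_1(0)$ and the likelihood ratio $m(s)=f_1(s)/f_0(s)$ is strictly increasing in $s$. For $x\in(0,1)$ let $s^*(x)=m^{-1}\!\left(\frac{x}{1-x}\right)$ (the cutoff signal above which a type-$x$ voter votes for the government absent trolls). A sender chooses, for each type $x$, a number $\alpha_x\in[0,1]$ (mass of trolls) and a probability distribution $\tilde F_x$ on $\mathbb{R}$ with density $\tilde f_x$ (trolls' messages, not depending on the state). A voter of type $x$ observes, with probability $1-\alpha_x$, her informative signal drawn from $F_\theta$, and with probability $\alpha_x$ a message drawn from $\tilde F_x$, without knowing which. After observing $s$ her posterior that $\theta=1$ is $$\pi_x(s)=\frac{(1-\alpha_x)f_1(s)+\alpha_x\tilde f_x(s)}{(1-\alpha_x)f_1(s)+\alpha_x\tilde f_x(s)+(1-\alpha_x)f_0(s)+\alpha_x\tilde f_x(s)},$$ and she votes for the government iff $\pi_x(s)\ge x$. Her probability of voting for the government in state $\theta$ is $p_\theta(x)=\int_{\{s:\pi_x(s)\ge x\}}[(1-\alpha_x)f_\theta(s)+\alpha_x\tilde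 f_x(s)]\,ds$, and the government's vote share in state $\theta$ is $V_\theta=\int p_\theta(x)\,dH(x)$. The sender's payoff is $u(V_\theta)$ for a strictly increasing function $u$; she chooses $(\alpha_x,\tilde F_x)_{x\in\mathbb{R}}$ to maximise the expectation $\tfrac12u(V_0)+\tfrac12u(V_1)$, and among choices yielding the same vote shares in both states she strictly prefers $(\alpha_x,\tilde F_x)_x$ over $(\alpha'_x,\tilde F'_x)_x$ whenever $\alpha_x\le\alpha'_x$ for all $x$ with strict inequality for some $x$. Notation: for $x\ne\tfrac12$, $\kappa_x(s):=\dfrac{xF_0(s)-(1-x)F_1(s)}{1-2x}$, and $\kappa_x'$ denotes its derivative in $s$. *)

theory Defs
  imports "HOL-Analysis.Analysis"
begin

text \<open>Troll-farm voting model, restricted to a single voter type x.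
  f0, f1 : densities of the informative signal in states 0 and 1.
  alpha  : mass of trolls for type x;  ft : density of trolls' messages.\<close>

definition cdf_of :: "(real \<Rightarrow> real) \<Rightarrow> real \<Rightarrow> real" where
  "cdf_of f s = (LINT t:{..s}|lborel. f t)"

definition sstar :: "(real \<Rightarrow> real) \<Rightarrow> (real \<Rightarrow> real) \<Rightarrow> real \<Rightarrow> real" where
  "sstar f0 f1 x = (THE s. f1 s / f0 s = x / (1 - x))"

definition kappa :: "(real \<Rightarrow> real) \<Rightarrow> (real \<Rightarrow> real) \<Rightarrow> real \<Rightarrow> real \<Rightarrow> real" where
  "kappa f0 f1 x s = (x * cdf_of f0 s - (1 - x) * cdf_of f1 s) / (1 - 2 * x)"

definition kappa' :: "(real \<Rightarrow> real) \<Rightarrow> (real \<Rightarrow> real) \<Rightarrow> real \<Rightarrow> real \<Rightarrow> real" where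
  "kappa' f0 f1 x s = deriv (kappa f0 f1 x) s"

definition posterior ::
  "(real \<Rightarrow> real) \<Rightarrow> (real \<Rightarrow> real) \<Rightarrow> real \<Rightarrow> (real \<Rightarrow> real) \<Rightarrow> real \<Rightarrow> real" where
  "posterior f0 f1 \<alpha> ft s =
     ((1 - \<alpha>) * f1 s + \<alpha> * ft s) /
     ((1 - \<alpha>) * f1 s + \<alpha> * ft s + (1 - \<alpha>) * f0 s + \<alpha> * ft s)"

text \<open>Probability p_theta(x) that a type-x voter votes for the government in
  state theta, where ftheta is the signal density f_theta of that state.\<close>
definition vote_prob ::
  "(real \<Rightarrow> real) \<Rightarrow> (real \<Rightarrow> real) \<Rightarrow> (real \<Rightarrow> real) \<Rightarrow> real \<Rightarrow> real \<Rightarrow> (real \<Rightarrow> real) \<Rightarrow> real" where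
  "vote_prob f0 f1 ftheta x \<alpha> ft =
     (LINT s:{s. posterior f0 f1 \<alpha> ft s \<ge> x}|lborel. (1 - \<alpha>) * ftheta s + \<alpha> * ft s)"

definition is_density :: "(real \<Rightarrow> real) \<Rightarrow> bool" where
  "is_density g \<longleftrightarrow> g \<in> borel_measurable borel \<and> (\<forall>s. g s \<ge> 0) \<and>
     integrable lborel g \<and> integral\<^sup>L lborel g = 1"

definition admissible :: "real \<Rightarrow> (real \<Rightarrow> real) \<Rightarrow> bool" where
  "admissible \<alpha> ft \<longleftrightarrow> 0 \<le> \<alpha> \<and> \<alpha> \<le> 1 \<and> is_density ft"

definition sender_prefers ::
  "(real \<Rightarrow> real) \<Rightarrow> (real \<Rightarrow> real) \<Rightarrow> real \<Rightarrow> real \<Rightarrow> (real \<Rightarrow> real) \<Rightarrow> real \<Rightarrow> (real \<Rightarrow> real) \<Rightarrow> bool" where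
  "sender_prefers f0 f1 x a' g' a g \<longleftrightarrow>
     (let p0' = vote_prob f0 f1 f0 x a' g'; p1' = vote_prob f0 f1 f1 x a' g';
          p0 = vote_prob f0 f1 f0 x a g; p1 = vote_prob f0 f1 f1 x a g in
      (p0' \<ge> p0 \<and> p1' \<ge> p1 \<and> (p0' > p0 \<or> p1' > p1)) \<or>
      (p0' = p0 \<and> p1' = p1 \<and> a' < a))"

definition optimal_choice ::
  "(real \<Rightarrow> real) \<Rightarrow> (real \<Rightarrow> real) \<Rightarrow> real \<Rightarrow> real \<Rightarrow> (real \<Rightarrow> real) \<Rightarrow> bool" where
  "optimal_choice f0 f1 x \<alpha> ft \<longleftrightarrow> admissible \<alpha> ft \<and>
     \<not> (\<exists>\<alpha>' ft'. admissible \<alpha>' ft' \<and> sender_prefers f0 f1 x \<alpha>' ft' \<alpha> ft)"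

end

theory Submission
  imports Defs
begin

lemma cdf_deriv:
  assumes c: "continuous_on UNIV f" and i: "integrable lborel f"
  shows "(cdf_of f has_real_derivative f t) (at t)"
proof -
  define a where "a = t - 1"
  define b where "b = t + 1"
  have si: "set_integrable lborel S f" if "S \<in> sets borel" for S
    unfolding set_integrable_def using integrable_mult_indicator[OF _ i] that by simp
  have eq: "cdf_of f s = (LINT u:{..<a}|lborel. f u) + integral {a..s} f" if "s \<in> {a<..<b}" for s
  proof -
    have "{..s} = {..<a} \<union> {a..s}" using that by auto
    then have "cdf_of f s = (LINT u:{..<a} \<union> {a..s}|lborel. f u)" unfolding cdf_of_def by simp
    also have "\<dots> = (LINT u:{..<a}|lborel. f u) + (LINT u:{a..s}|lborel. f u)"
      by (rule set_integral_Un) (auto intro!: si)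
    also have "(LINT u:{a..s}|lborel. f u) = integral {a..s} f"
      by (rule set_borel_integral_eq_integral(2)) (auto intro!: si)
    finally show ?thesis .
  qed
  have "((\<lambda>s. integral {a..s} f) has_real_derivative f t) (at t within {a..b})"
    by (rule integral_has_real_derivative) (auto intro: continuous_on_subset[OF c] simp: a_def b_def)
  then have D: "((\<lambda>s. integral {a..s} f) has_real_derivative f t) (at t)"
    using at_within_interior[of t "{a..b}"] by (simp add: a_def b_def)
  have "((\<lambda>s. (LINT u:{..<a}|lborel. f u) + integral {a..s} f) has_real_derivative f t) (at t)"
    using DERIV_add[OF DERIV_const D] by simp
  then show ?thesis
    by (rule has_field_derivative_transform_within_open[where S="{a<..<b}"]) (auto simp: eq a_def b_def)
qed


lemma pos_int:
  fixes f :: "real \<Rightarrow> real"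
  assumes S: "S \<in> sets borel" and m: "emeasure lborel S \<noteq> 0"
    and p: "\<And>s. s \<in> S \<Longrightarrow> 0 < f s"
    and i: "integrable lborel (\<lambda>s. indicator S s * f s)"
  shows "0 < integral\<^sup>L lborel (\<lambda>s. indicator S s * f s)"
proof -
  have nn: "AE s in lborel. 0 \<le> indicator S s * f s"
    by (auto split: split_indicator intro: less_imp_le p)
  have ge: "0 \<le> integral\<^sup>L lborel (\<lambda>s. indicator S s * f s)"
    by (rule integral_nonneg_AE[OF nn])
  show ?thesis
  proof (rule ccontr)
    assume "\<not> ?thesis"
    then have "integral\<^sup>L lborel (\<lambda>s. indicator S s * f s) = 0" using ge by simp
    then have "AE s in lborel. indicator S s * f s = 0"
      using integral_nonneg_eq_0_iff_AE[OF i nn] by simp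
    then have "AE s in lborel. s \<notin> S"
      by eventually_elim (auto split: split_indicator dest: p)
    then have "emeasure lborel S = 0"
      using AE_iff_measurable[of S lborel "\<lambda>s. s \<notin> S"] S by simp
    then show False using m by simp
  qed
qed

lemma emeasure_Iio_ne0: "emeasure lborel {..<(c::real)} \<noteq> 0"
proof -
  have "emeasure lborel {c-1..c-1/2} \<le> emeasure lborel {..<c}"
    by (rule emeasure_mono) auto
  moreover have "emeasure lborel {c-1..c-1/2} = ennreal (1/2)" by simp
  ultimately show ?thesis by (metis ennreal_eq_0_iff le_zero_eq linorder_not_le zero_less_divide_1_iff zero_less_numeral)
qed

lemma emeasure_Ioi_ne0: "emeasure lborel {(c::real)<..} \<noteq> 0"
proof -
  have "emeasure lborel {c+1/2..c+1} \<le> emeasure lborel {c<..}"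
    by (rule emeasure_mono) auto
  moreover have "emeasure lborel {c+1/2..c+1} = ennreal (1/2)" by simp
  ultimately show ?thesis by (metis ennreal_eq_0_iff le_zero_eq linorder_not_le zero_less_divide_1_iff zero_less_numeral)
qed

lemma int_ind:
  fixes f :: "real \<Rightarrow> real"
  shows "S \<in> sets borel \<Longrightarrow> integrable lborel f \<Longrightarrow> integrable lborel (\<lambda>s. indicator S s * f s)"
  using integrable_mult_indicator[of S lborel f] by simp

lemma set_int_conv:
  fixes f :: "real \<Rightarrow> real"
  shows "(LINT s:S|lborel. f s) = integral\<^sup>L lborel (\<lambda>s. indicator S s * f s)"
  by (simp add: set_lebesgue_integral_def)

lemma dom_helper:
  fixes P0 P1 c0 c1 a b :: real
  assumes "P0 \<le> c0" "P1 \<le> c1"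
    "\<not> ((c0 \<ge> P0 \<and> c1 \<ge> P1 \<and> (c0 > P0 \<or> c1 > P1)) \<or> (c0 = P0 \<and> c1 = P1 \<and> a < b))"
  shows "P0 = c0 \<and> P1 = c1 \<and> b \<le> a"
proof -
  have "\<not> c0 > P0" using assms by blast
  moreover have "\<not> c1 > P1" using assms by blast
  ultimately have e: "P0 = c0" "P1 = c1" using assms(1,2) by auto
  then have "\<not> a < b" using assms(3) by blast
  with e show ?thesis by simp
qed

lemma dom_helper2:
  fixes P0 P1 c0 c1 a b :: real
  assumes "P0 \<le> c0" "P1 \<le> c1"
    "(P0 \<ge> c0 \<and> P1 \<ge> c1 \<and> (P0 > c0 \<or> P1 > c1)) \<or> (P0 = c0 \<and> P1 = c1 \<and> b < a)"
  shows "P0 = c0 \<and> P1 = c1 \<and> b < a"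
  using assms by auto
locale troll =
  fixes f0 f1 :: "real \<Rightarrow> real" and x :: real
  assumes cont0: "continuous_on UNIV f0" and cont1: "continuous_on UNIV f1"
    and pos0: "\<And>s. f0 s > 0" and pos1: "\<And>s. f1 s > 0"
    and int0: "integrable lborel f0" and int1: "integrable lborel f1"
    and tot0: "integral\<^sup>L lborel f0 = 1" and tot1: "integral\<^sup>L lborel f1 = 1"
    and mlr: "strict_mono (\<lambda>s. f1 s / f0 s)"
    and sstar_ex: "\<exists>s. f1 s / f0 s = x / (1 - x)"
    and x0: "0 < x" and x1: "x < 1" and xh: "x \<noteq> 1/2"
begin

definition kd where "kd s = (x * f0 s - (1 - x) * f1 s) / (1 - 2 * x)"
definition ss where "ss = sstar f0 f1 x"
definition k where "k = kappa f0 f1 x ss"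

lemma meas0[measurable]: "f0 \<in> borel_measurable borel"
  by (rule borel_measurable_continuous_onI[OF cont0])
lemma meas1[measurable]: "f1 \<in> borel_measurable borel"
  by (rule borel_measurable_continuous_onI[OF cont1])
lemma measkd[measurable]: "kd \<in> borel_measurable borel"
  unfolding kd_def[abs_def] by measurable
lemma intkd: "integrable lborel kd"
  unfolding kd_def[abs_def] using int0 int1 by auto

lemma m_ss: "f1 ss / f0 ss = x / (1 - x)"
proof -
  obtain s0 where s0: "f1 s0 / f0 s0 = x / (1 - x)" using sstar_ex by blast
  have "ss = s0" unfolding ss_def sstar_def
  proof (rule the_equality)
    show "f1 s0 / f0 s0 = x / (1 - x)" by (rule s0)
    fix s assume "f1 s / f0 s = x / (1 - x)"
    then show "s = s0" using s0 strict_mono_eq[OF mlr, of s s0] by simp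
  qed
  then show ?thesis using s0 by simp
qed

lemma m_less: "f1 s / f0 s < x / (1 - x) \<longleftrightarrow> s < ss"
  using strict_mono_less[OF mlr, of s ss] m_ss by simp

lemma lt_ss: "s < ss \<Longrightarrow> (1 - x) * f1 s < x * f0 s"
  using m_less[of s] pos0[of s] x1 by (simp add: divide_less_eq field_simps)

lemma gt_ss: "ss < s \<Longrightarrow> (1 - x) * f1 s > x * f0 s"
  using m_less[of s] pos0[of s] x1 strict_mono_less[OF mlr, of ss s] m_ss
  by (simp add: less_divide_eq field_simps)

lemma eq_ss: "(1 - x) * f1 ss = x * f0 ss"
  using m_ss pos0[of ss] x1 by (simp add: field_simps)

lemma kd_ss: "kd ss = 0"
  using eq_ss by (simp add: kd_def)

lemma kappa'_eq: "kappa' f0 f1 x s = kd s"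
proof -
  have "((\<lambda>s. (x * cdf_of f0 s - (1 - x) * cdf_of f1 s) / (1 - 2 * x)) has_real_derivative kd s) (at s)"
    unfolding kd_def
    by (rule DERIV_cdivide[OF DERIV_diff[OF DERIV_cmult[OF cdf_deriv[OF cont0 int0]] DERIV_cmult[OF cdf_deriv[OF cont1 int1]]]])
  then show ?thesis unfolding kappa'_def kappa_def[abs_def] by (rule DERIV_imp_deriv)
qed

lemma kd_int_all: "integral\<^sup>L lborel kd = -1"
  unfolding kd_def using int0 int1 tot0 tot1 xh
  by (simp add: integral_diff field_simps)

lemma k_eq: "k = integral\<^sup>L lborel (\<lambda>s. indicator {..ss} s * kd s)"
proof -
  have "integral\<^sup>L lborel (\<lambda>s. indicator {..ss} s * kd s) =
     integral\<^sup>L lborel (\<lambda>s. (x * (indicator {..ss} s * f0 s) - (1 - x) * (indicator {..ss} s * f1 s)) / (1 - 2 * x))"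
    by (rule Bochner_Integration.integral_cong) (auto simp: kd_def field_simps)
  also have "\<dots> = (x * integral\<^sup>L lborel (\<lambda>s. indicator {..ss} s * f0 s) - (1 - x) * integral\<^sup>L lborel (\<lambda>s. indicator {..ss} s * f1 s)) / (1 - 2 * x)"
    using int_ind[OF _ int0, of "{..ss}"] int_ind[OF _ int1, of "{..ss}"]
    by (simp add: integral_diff)
  finally show ?thesis unfolding k_def kappa_def cdf_of_def set_int_conv by simp
qed


definition A where "A \<alpha> ft = {s. x \<le> posterior f0 f1 \<alpha> ft s}"

lemma kd_mul: "(1 - 2 * x) * kd s = x * f0 s - (1 - x) * f1 s"
  using xh by (simp add: kd_def)

lemma post_iff:
  assumes "0 \<le> \<alpha>" "\<alpha> < 1" "0 \<le> ft s"
  shows "x \<le> posterior f0 f1 \<alpha> ft s \<longleftrightarrow> 0 \<le> (1 - 2 * x) * (\<alpha> * ft s - (1 - \<alpha>) * kd s)"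
proof -
  define D where "D = (1 - \<alpha>) * f1 s + \<alpha> * ft s + (1 - \<alpha>) * f0 s + \<alpha> * ft s"
  define N where "N = (1 - \<alpha>) * f1 s + \<alpha> * ft s"
  have Dp: "0 < D" unfolding D_def using assms pos0[of s] pos1[of s]
    by (intro add_pos_nonneg add_nonneg_pos mult_pos_pos mult_nonneg_nonneg) auto
  have "(1 - 2 * x) * (\<alpha> * ft s - (1 - \<alpha>) * kd s) = (1 - 2 * x) * \<alpha> * ft s - (1 - \<alpha>) * ((1 - 2 * x) * kd s)"
    by (simp add: algebra_simps)
  also have "\<dots> = (1 - 2 * x) * \<alpha> * ft s - (1 - \<alpha>) * (x * f0 s - (1 - x) * f1 s)"
    by (simp only: kd_mul)
  also have "\<dots> = N - x * D" unfolding N_def D_def by (simp add: algebra_simps)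
  finally have id: "(1 - 2 * x) * (\<alpha> * ft s - (1 - \<alpha>) * kd s) = N - x * D" .
  have "x \<le> posterior f0 f1 \<alpha> ft s \<longleftrightarrow> x \<le> N / D"
    by (simp only: posterior_def N_def D_def)
  also have "\<dots> \<longleftrightarrow> x * D \<le> N" using Dp by (rule pos_le_divide_eq)
  also have "\<dots> \<longleftrightarrow> 0 \<le> N - x * D" by linarith
  finally show ?thesis unfolding id .
qed

lemma post_eq:
  assumes "0 \<le> \<alpha>" "\<alpha> < 1" "0 \<le> ft s" "\<alpha> * ft s = (1 - \<alpha>) * kd s"
  shows "posterior f0 f1 \<alpha> ft s = x"
proof -
  define D where "D = (1 - \<alpha>) * f1 s + \<alpha> * ft s + (1 - \<alpha>) * f0 s + \<alpha> * ft s"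
  define N where "N = (1 - \<alpha>) * f1 s + \<alpha> * ft s"
  have Dp: "0 < D" unfolding D_def using assms pos0[of s] pos1[of s]
    by (intro add_pos_nonneg add_nonneg_pos mult_pos_pos mult_nonneg_nonneg) auto
  have "(1 - 2 * x) * (\<alpha> * ft s - (1 - \<alpha>) * kd s) = (1 - 2 * x) * \<alpha> * ft s - (1 - \<alpha>) * ((1 - 2 * x) * kd s)"
    by (simp add: algebra_simps)
  also have "\<dots> = (1 - 2 * x) * \<alpha> * ft s - (1 - \<alpha>) * (x * f0 s - (1 - x) * f1 s)"
    by (simp only: kd_mul)
  also have "\<dots> = N - x * D" unfolding N_def D_def by (simp add: algebra_simps)
  finally have id: "(1 - 2 * x) * (\<alpha> * ft s - (1 - \<alpha>) * kd s) = N - x * D" .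
  then have "N = x * D" using assms(4) by simp
  moreover have "posterior f0 f1 \<alpha> ft s = N / D" by (simp only: posterior_def N_def D_def)
  ultimately show ?thesis using Dp by simp
qed

lemma post_one: "posterior f0 f1 1 ft s \<le> 1/2"
proof (cases "ft s = 0")
  case True
  then show ?thesis unfolding posterior_def by simp
next
  case False
  then have "posterior f0 f1 1 ft s = ft s / (2 * ft s)" unfolding posterior_def by simp
  also have "\<dots> = 1/2" using False by simp
  finally show ?thesis by simp
qed

lemma post_meas: "ft \<in> borel_measurable borel \<Longrightarrow> posterior f0 f1 \<alpha> ft \<in> borel_measurable borel"
  unfolding posterior_def[abs_def]
  by (intro borel_measurable_divide borel_measurable_add borel_measurable_times borel_measurable_const meas0 meas1)

lemma A_meas: assumes "ft \<in> borel_measurable borel" shows "A \<alpha> ft \<in> sets borel"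
proof -
  have "{s \<in> space borel. x \<le> posterior f0 f1 \<alpha> ft s} \<in> sets borel"
    using post_meas[OF assms, of \<alpha>] by (intro borel_measurable_le) auto
  then show ?thesis unfolding A_def by simp
qed

lemma fth_props:
  assumes "fth = f0 \<or> fth = f1"
  shows "fth \<in> borel_measurable borel" "\<And>s. 0 < fth s" "integrable lborel fth" "integral\<^sup>L lborel fth = 1"
  using assms meas0 meas1 pos0 pos1 int0 int1 tot0 tot1 by auto

lemma vp_conv:
  "vote_prob f0 f1 fth x \<alpha> ft =
     integral\<^sup>L lborel (\<lambda>s. indicator (A \<alpha> ft) s * ((1 - \<alpha>) * fth s + \<alpha> * ft s))"
  unfolding vote_prob_def set_int_conv A_def by simp

lemma dens:
  assumes "is_density ft"
  shows "ft \<in> borel_measurable borel" "\<And>s. 0 \<le> ft s" "integrable lborel ft" "integral\<^sup>L lborel ft = 1"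
  using assms unfolding is_density_def by auto

lemma q_int:
  assumes "fth = f0 \<or> fth = f1" "is_density ft"
  shows "integrable lborel (\<lambda>s. (1 - \<alpha>) * fth s + \<alpha> * ft s)"
    "integral\<^sup>L lborel (\<lambda>s. (1 - \<alpha>) * fth s + \<alpha> * ft s) = 1"
  using fth_props[OF assms(1)] dens[OF assms(2)] by (auto simp: integral_add)

lemma vp_le1:
  assumes "fth = f0 \<or> fth = f1" "admissible \<alpha> ft"
  shows "vote_prob f0 f1 fth x \<alpha> ft \<le> 1"
proof -
  note F = fth_props[OF assms(1)] and D = dens[of ft] and Q = q_int[OF assms(1), of ft \<alpha>]
  have a: "0 \<le> \<alpha>" "\<alpha> \<le> 1" "is_density ft" using assms(2) unfolding admissible_def by auto
  have qnn: "0 \<le> (1 - \<alpha>) * fth s + \<alpha> * ft s" for s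
    using a D(2)[OF a(3), of s] F(2)[of s] by (intro add_nonneg_nonneg mult_nonneg_nonneg) auto
  have "vote_prob f0 f1 fth x \<alpha> ft \<le> integral\<^sup>L lborel (\<lambda>s. (1 - \<alpha>) * fth s + \<alpha> * ft s)"
    unfolding vp_conv
    using a D[OF a(3)] F
    by (intro integral_mono int_ind Q(1) A_meas) (auto split: split_indicator simp: qnn)
  then show ?thesis using Q(2)[OF a(3)] by simp
qed

lemma vp_cong:
  assumes "fth = f0 \<or> fth = f1" "ft \<in> borel_measurable borel" "ft' \<in> borel_measurable borel"
    "AE s in lborel. ft s = ft' s"
  shows "vote_prob f0 f1 fth x \<alpha> ft = vote_prob f0 f1 fth x \<alpha> ft'"
proof -
  note F = fth_props[OF assms(1)]
  have [measurable]: "fth \<in> borel_measurable borel" "ft \<in> borel_measurable borel" "ft' \<in> borel_measurable borel"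
    using F assms by auto
  have [measurable]: "A \<alpha> ft \<in> sets borel" "A \<alpha> ft' \<in> sets borel" using A_meas assms by auto
  have "AE s in lborel. indicator (A \<alpha> ft) s * ((1 - \<alpha>) * fth s + \<alpha> * ft s) =
      indicator (A \<alpha> ft') s * ((1 - \<alpha>) * fth s + \<alpha> * ft' s)"
    using assms(4) by eventually_elim (simp add: A_def posterior_def indicator_def)
  then show ?thesis unfolding vp_conv
    by (rule integral_cong_AE[rotated 2]) measurable
qed

lemma vp_full:
  assumes "fth = f0 \<or> fth = f1" "admissible \<alpha> ft" "AE s in lborel. s \<in> A \<alpha> ft"
  shows "vote_prob f0 f1 fth x \<alpha> ft = 1"
proof -
  note F = fth_props[OF assms(1)]
  have a: "is_density ft" using assms(2) unfolding admissible_def by auto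
  note D = dens[OF a]
  have [measurable]: "fth \<in> borel_measurable borel" "ft \<in> borel_measurable borel" using F D by auto
  have [measurable]: "A \<alpha> ft \<in> sets borel" using A_meas D by auto
  have "vote_prob f0 f1 fth x \<alpha> ft = integral\<^sup>L lborel (\<lambda>s. (1 - \<alpha>) * fth s + \<alpha> * ft s)"
    unfolding vp_conv
    by (rule integral_cong_AE) (use assms(3) in auto)
  then show ?thesis using q_int[OF assms(1) a] by simp
qed

lemma vp1_AE:
  assumes "fth = f0 \<or> fth = f1" "admissible \<alpha> ft" "\<alpha> < 1" "vote_prob f0 f1 fth x \<alpha> ft = 1"
  shows "AE s in lborel. s \<in> A \<alpha> ft"
proof -
  note F = fth_props[OF assms(1)]
  have a: "0 \<le> \<alpha>" "\<alpha> \<le> 1" "is_density ft" using assms(2) unfolding admissible_def by auto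
  note D = dens[OF a(3)]
  note Q = q_int[OF assms(1) a(3), of \<alpha>]
  have [measurable]: "fth \<in> borel_measurable borel" "ft \<in> borel_measurable borel" using F D by auto
  define q where "q s = (1 - \<alpha>) * fth s + \<alpha> * ft s" for s
  have qp: "0 < q s" for s unfolding q_def using a F(2)[of s] D(2)[of s] assms(3)
    by (intro add_pos_nonneg mult_pos_pos mult_nonneg_nonneg) auto
  have iq: "integrable lborel q" using Q unfolding q_def by simp
  have i1: "integrable lborel (\<lambda>s. indicator (A \<alpha> ft) s * q s)" by (intro int_ind iq A_meas) simp
  have i2: "integrable lborel (\<lambda>s. indicator (- A \<alpha> ft) s * q s)" by (intro int_ind iq borel_comp A_meas) simp
  have "integral\<^sup>L lborel (\<lambda>s. indicator (- A \<alpha> ft) s * q s) =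
        integral\<^sup>L lborel (\<lambda>s. q s - indicator (A \<alpha> ft) s * q s)"
    by (rule Bochner_Integration.integral_cong) (auto split: split_indicator)
  also have "\<dots> = 0" using assms(4) Q(2) i1 iq unfolding vp_conv q_def by (simp add: integral_diff)
  moreover have "AE s in lborel. 0 \<le> indicator (- A \<alpha> ft) s * q s"
    using qp by (auto split: split_indicator intro: less_imp_le)
  ultimately have "AE s in lborel. indicator (- A \<alpha> ft) s * q s = 0"
    using integral_nonneg_eq_0_iff_AE[OF i2] by simp
  then show ?thesis
  proof eventually_elim
    fix s assume h: "indicator (- A \<alpha> ft) s * q s = 0"
    show "s \<in> A \<alpha> ft"
    proof (rule ccontr)
      assume "s \<notin> A \<alpha> ft"
      then have "indicator (- A \<alpha> ft) s = (1::real)" by simp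
      with h have "q s = 0" by simp
      with qp[of s] show False by simp
    qed
  qed
qed


lemma ind_ss: "indicator {..ss} s * kd s = indicator {..<ss} s * kd s"
  using kd_ss by (cases "s < ss"; cases "s = ss") (auto simp: indicator_def)

lemma ind_ss': "indicator {ss..} s * kd s = indicator {ss<..} s * kd s"
  using kd_ss by (cases "s > ss"; cases "s = ss") (auto simp: indicator_def)

definition aL where "aL = k / (k + 1)"
definition gL where "gL s = indicator {..<ss} s * ((1 - aL) / aL * kd s)"

context
  assumes xl: "x < 1/2"
begin

lemma kd_pos_L: "s < ss \<Longrightarrow> 0 < kd s"
  using lt_ss[of s] xl by (simp add: kd_def)

lemma kd_neg_L: "ss < s \<Longrightarrow> kd s < 0"
  using gt_ss[of s] xl by (simp add: kd_def divide_less_0_iff)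

lemma k_pos: "0 < k"
proof -
  have "k = integral\<^sup>L lborel (\<lambda>s. indicator {..<ss} s * kd s)"
    unfolding k_eq ind_ss ..
  also have "0 < \<dots>"
    using emeasure_Iio_ne0[of ss] by (intro pos_int) (auto intro: kd_pos_L int_ind intkd)
  finally show ?thesis by simp
qed

lemma aL_props: "0 < aL" "aL < 1" "(1 - aL) / aL = 1 / k"
  using k_pos unfolding aL_def by (auto simp: field_simps)

lemma gL_nonneg: "0 \<le> gL s"
  using kd_pos_L[of s] aL_props k_pos unfolding gL_def by (auto simp: indicator_def)

lemma gL_meas[measurable]: "gL \<in> borel_measurable borel"
  unfolding gL_def[abs_def] by measurable

lemma gL_int: "integrable lborel gL"
proof -
  have "integrable lborel (\<lambda>s. (1 - aL) / aL * (indicator {..<ss} s * kd s))"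
    by (intro integrable_mult_right int_ind intkd) auto
  then show ?thesis unfolding gL_def[abs_def] by (simp add: algebra_simps)
qed

lemma gL_tot: "integral\<^sup>L lborel gL = 1"
proof -
  have "integral\<^sup>L lborel gL = integral\<^sup>L lborel (\<lambda>s. (1 - aL) / aL * (indicator {..<ss} s * kd s))"
    unfolding gL_def by (simp add: algebra_simps)
  also have "\<dots> = (1 - aL) / aL * k" unfolding k_eq ind_ss by simp
  finally show ?thesis using aL_props k_pos by simp
qed

lemma gL_dens: "is_density gL"
  unfolding is_density_def using gL_meas gL_nonneg gL_int gL_tot by auto

lemma gL_adm: "admissible aL gL"
  unfolding admissible_def using gL_dens aL_props by auto

lemma gL_key: "s \<le> ss \<Longrightarrow> aL * gL s = (1 - aL) * kd s"
  using aL_props kd_ss unfolding gL_def by (cases "s = ss") (auto simp: field_simps indicator_def)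

lemma post_gL_eq: "s \<le> ss \<Longrightarrow> posterior f0 f1 aL gL s = x"
  using aL_props gL_nonneg gL_key by (intro post_eq) auto

lemma post_gL_ge: "x \<le> posterior f0 f1 aL gL s"
proof (cases "s \<le> ss")
  case True then show ?thesis using post_gL_eq by simp
next
  case False
  then have "gL s = 0" "kd s < 0" using kd_neg_L unfolding gL_def by auto
  have "(1 - aL) * kd s \<le> 0" using aL_props \<open>kd s < 0\<close> by (intro mult_nonneg_nonpos) auto
  then have "(1 - 2 * x) * ((1 - aL) * kd s) \<le> 0" using xl mult_nonneg_nonpos[of "1 - 2 * x" "(1 - aL) * kd s"] by simp
  then show ?thesis using aL_props \<open>gL s = 0\<close>
    by (subst post_iff) auto
qed

lemma fullL:
  assumes "fth = f0 \<or> fth = f1" "is_density ft" "AE s in lborel. ft s = gL s"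
  shows "vote_prob f0 f1 fth x aL ft = 1"
proof -
  have "vote_prob f0 f1 fth x aL ft = vote_prob f0 f1 fth x aL gL"
    using assms dens[OF assms(2)] by (intro vp_cong) auto
  also have "\<dots> = 1"
    using post_gL_ge by (intro vp_full assms(1) gL_adm) (auto simp: A_def)
  finally show ?thesis .
qed

lemma lbL:
  assumes adm: "admissible \<alpha> ft" and v: "vote_prob f0 f1 f0 x \<alpha> ft = 1"
  shows "aL \<le> \<alpha> \<and> (\<alpha> \<le> aL \<longrightarrow> \<alpha> = aL \<and> (AE s in lborel. ft s = gL s))"
proof (cases "\<alpha> = 1")
  case True
  then show ?thesis using aL_props by auto
next
  case False
  have a: "0 \<le> \<alpha>" "\<alpha> < 1" "is_density ft" using adm False unfolding admissible_def by auto
  note D = dens[OF a(3)]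
  have AEA: "AE s in lborel. s \<in> A \<alpha> ft" by (rule vp1_AE[OF _ adm a(2) v]) simp
  define h where "h s = \<alpha> * ft s - (1 - \<alpha>) * (indicator {..ss} s * kd s)" for s
  have hnn: "AE s in lborel. 0 \<le> h s"
    using AEA
  proof eventually_elim
    fix s assume "s \<in> A \<alpha> ft"
    then have "0 \<le> (1 - 2 * x) * (\<alpha> * ft s - (1 - \<alpha>) * kd s)"
      using post_iff[of \<alpha> ft s] a D(2)[of s] unfolding A_def by simp
    then have "0 \<le> \<alpha> * ft s - (1 - \<alpha>) * kd s" using xl by (simp add: zero_le_mult_iff)
    then show "0 \<le> h s" unfolding h_def using a D(2)[of s] by (auto simp: indicator_def)
  qed
  have i1: "integrable lborel (\<lambda>s. \<alpha> * ft s)" using D(3) by simp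
  have i2: "integrable lborel (\<lambda>s. (1 - \<alpha>) * (indicator {..ss} s * kd s))"
    using int_ind[OF _ intkd, of "{..ss}"] by simp
  have ih: "integrable lborel h" unfolding h_def[abs_def] by (rule Bochner_Integration.integrable_diff[OF i1 i2])
  have hint: "integral\<^sup>L lborel h = \<alpha> - (1 - \<alpha>) * k"
    unfolding h_def[abs_def] k_eq using D(3,4) int_ind[OF _ intkd, of "{..ss}"] by (simp add: integral_diff)
  have "0 \<le> integral\<^sup>L lborel h" by (rule integral_nonneg_AE[OF hnn])
  then have "k \<le> \<alpha> * (k + 1)" unfolding hint by (simp add: algebra_simps)
  then have ge: "aL \<le> \<alpha>" unfolding aL_def using k_pos by (simp add: divide_le_eq)
  moreover have "\<alpha> = aL \<and> (AE s in lborel. ft s = gL s)" if le: "\<alpha> \<le> aL"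
  proof -
    have eq: "\<alpha> = aL" using le ge by simp
    then have "\<alpha> * (k + 1) = k" unfolding aL_def using k_pos by (simp add: field_simps)
    then have "integral\<^sup>L lborel h = 0" unfolding hint by (simp add: algebra_simps)
    then have "AE s in lborel. h s = 0" using integral_nonneg_eq_0_iff_AE[OF ih hnn] by simp
    then have "AE s in lborel. ft s = gL s"
    proof eventually_elim
      fix s assume "h s = 0"
      then have "aL * ft s = (1 - aL) * (indicator {..<ss} s * kd s)" unfolding h_def eq ind_ss by simp
      then show "ft s = gL s" unfolding gL_def using aL_props by (simp add: field_simps)
    qed
    with eq show ?thesis by simp
  qed
  ultimately show ?thesis by blast
qed

end


definition aH where "aH = (k + 1) / k"
definition gH where "gH s = indicator {ss..} s * ((1 - aH) / aH * kd s)"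
definition PP where "PP fth = integral\<^sup>L lborel (\<lambda>s. indicator {ss..} s * fth s)"
definition pH where "pH fth = (1 - aH) * PP fth + aH"

context
  assumes xg: "1/2 < x"
begin

lemma kd_neg_H: "s < ss \<Longrightarrow> kd s < 0"
  using lt_ss[of s] xg by (simp add: kd_def divide_less_0_iff)

lemma kd_pos_H: "ss < s \<Longrightarrow> 0 < kd s"
  using gt_ss[of s] xg by (simp add: kd_def zero_less_divide_iff)

lemma kd_nn_H: "ss \<le> s \<Longrightarrow> 0 \<le> kd s"
  using kd_pos_H[of s] kd_ss by (cases "s = ss") auto

lemma K_eq: "integral\<^sup>L lborel (\<lambda>s. indicator {ss..} s * kd s) = -1 - k"
proof -
  have "integral\<^sup>L lborel (\<lambda>s. indicator {ss..} s * kd s) =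
        integral\<^sup>L lborel (\<lambda>s. kd s - indicator {..<ss} s * kd s)"
    by (rule Bochner_Integration.integral_cong) (auto simp: indicator_def)
  also have "\<dots> = -1 - k"
    unfolding k_eq ind_ss using intkd int_ind[OF _ intkd, of "{..<ss}"] kd_int_all
    by (simp add: Bochner_Integration.integral_diff)
  finally show ?thesis .
qed

lemma K_pos: "0 < -1 - k"
proof -
  have "0 < integral\<^sup>L lborel (\<lambda>s. indicator {ss<..} s * kd s)"
    using emeasure_Ioi_ne0[of ss] by (intro pos_int) (auto intro: kd_pos_H int_ind intkd)
  also have "\<dots> = -1 - k" unfolding K_eq[symmetric] ind_ss' ..
  finally show ?thesis .
qed

lemma aH_props: "0 < aH" "aH < 1" "(1 - aH) / aH = 1 / (-1 - k)" "aH = (1 - aH) * (-1 - k)"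
  using K_pos unfolding aH_def by (auto simp: field_simps)

lemma gH_nonneg: "0 \<le> gH s"
  using kd_nn_H[of s] aH_props K_pos unfolding gH_def by (auto simp: indicator_def)

lemma gH_meas[measurable]: "gH \<in> borel_measurable borel"
  unfolding gH_def[abs_def] by measurable

lemma gH_int: "integrable lborel gH"
proof -
  have "integrable lborel (\<lambda>s. (1 - aH) / aH * (indicator {ss..} s * kd s))"
    by (intro integrable_mult_right int_ind intkd) auto
  then show ?thesis unfolding gH_def[abs_def] by (simp add: algebra_simps)
qed

lemma gH_tot: "integral\<^sup>L lborel gH = 1"
proof -
  have "integral\<^sup>L lborel gH = integral\<^sup>L lborel (\<lambda>s. (1 - aH) / aH * (indicator {ss..} s * kd s))"
    unfolding gH_def by (simp add: algebra_simps)
  also have "\<dots> = (1 - aH) / aH * (-1 - k)" by (simp add: K_eq)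
  finally show ?thesis using aH_props K_pos by simp
qed

lemma gH_dens: "is_density gH"
  unfolding is_density_def using gH_meas gH_nonneg gH_int gH_tot by auto

lemma gH_adm: "admissible aH gH"
  unfolding admissible_def using gH_dens aH_props by auto

lemma gH_key: "ss \<le> s \<Longrightarrow> aH * gH s = (1 - aH) * kd s"
  using aH_props unfolding gH_def by (auto simp: field_simps indicator_def)

lemma post_gH_eq: "ss \<le> s \<Longrightarrow> posterior f0 f1 aH gH s = x"
  using aH_props gH_nonneg gH_key by (intro post_eq) auto

lemma A_gH: "A aH gH = {ss..}"
proof (intro set_eqI iffI)
  fix s assume s: "s \<in> A aH gH"
  show "s \<in> {ss..}"
  proof (rule ccontr)
    assume "s \<notin> {ss..}"
    then have "gH s = 0" "kd s < 0" using kd_neg_H[of s] unfolding gH_def by auto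
    then have "0 < - ((1 - aH) * kd s)" using aH_props by (simp add: mult_less_0_iff)
    then have "(1 - 2 * x) * (aH * gH s - (1 - aH) * kd s) < 0"
      using xg \<open>gH s = 0\<close> mult_neg_pos[of "1 - 2 * x" "- ((1 - aH) * kd s)"] by simp
    moreover have "0 \<le> (1 - 2 * x) * (aH * gH s - (1 - aH) * kd s)"
      using s post_iff[of aH gH s] aH_props gH_nonneg[of s] unfolding A_def by simp
    ultimately show False by simp
  qed
next
  fix s assume "s \<in> {ss..}"
  then show "s \<in> A aH gH" using post_gH_eq[of s] unfolding A_def by simp
qed

lemma PP_props:
  assumes "fth = f0 \<or> fth = f1"
  shows "0 < PP fth" "PP fth < 1"
proof -
  note F = fth_props[OF assms]
  have "emeasure lborel {ss<..} \<le> emeasure lborel {ss..}" by (rule emeasure_mono) auto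
  then have "emeasure lborel {ss..} \<noteq> 0" using emeasure_Ioi_ne0[of ss] by (auto simp: le_zero_eq)
  then show "0 < PP fth" unfolding PP_def
    using F by (intro pos_int) (auto intro: int_ind)
  have "0 < integral\<^sup>L lborel (\<lambda>s. indicator {..<ss} s * fth s)"
    using F emeasure_Iio_ne0[of ss] by (intro pos_int) (auto intro: int_ind)
  moreover have "integral\<^sup>L lborel (\<lambda>s. indicator {..<ss} s * fth s) = 1 - PP fth"
  proof -
    have "integral\<^sup>L lborel (\<lambda>s. indicator {..<ss} s * fth s) =
          integral\<^sup>L lborel (\<lambda>s. fth s - indicator {ss..} s * fth s)"
      by (rule Bochner_Integration.integral_cong) (auto simp: indicator_def)
    also have "\<dots> = 1 - PP fth" unfolding PP_def
      using F int_ind[OF _ F(3), of "{ss..}"] by (simp add: Bochner_Integration.integral_diff)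
    finally show ?thesis .
  qed
  ultimately show "PP fth < 1" by simp
qed

lemma vp_gH:
  assumes "fth = f0 \<or> fth = f1" "is_density ft" "AE s in lborel. ft s = gH s"
  shows "vote_prob f0 f1 fth x aH ft = pH fth"
proof -
  note F = fth_props[OF assms(1)]
  have "vote_prob f0 f1 fth x aH ft = vote_prob f0 f1 fth x aH gH"
    using assms dens[OF assms(2)] by (intro vp_cong) auto
  also have "\<dots> = integral\<^sup>L lborel (\<lambda>s. (1 - aH) * (indicator {ss..} s * fth s) + aH * gH s)"
    unfolding vp_conv A_gH
    by (rule Bochner_Integration.integral_cong) (auto simp: indicator_def gH_def algebra_simps)
  also have "\<dots> = pH fth" unfolding pH_def PP_def
    using int_ind[OF _ F(3), of "{ss..}"] gH_int gH_tot by simp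
  finally show ?thesis .
qed


lemma ubH:
  assumes fth: "fth = f0 \<or> fth = f1" and adm: "admissible \<alpha> ft"
  shows "vote_prob f0 f1 fth x \<alpha> ft \<le> pH fth \<and>
         (vote_prob f0 f1 fth x \<alpha> ft = pH fth \<longrightarrow> \<alpha> = aH \<and> (AE s in lborel. ft s = gH s))"
proof -
  note F = fth_props[OF fth]
  have a: "0 \<le> \<alpha>" "\<alpha> \<le> 1" "is_density ft" using adm unfolding admissible_def by auto
  note D = dens[OF a(3)]
  have P: "0 < PP fth" "PP fth < 1" using PP_props[OF fth] by auto
  have pHpos: "0 < pH fth" unfolding pH_def using P aH_props
    by (intro add_nonneg_pos mult_nonneg_nonneg) auto
  have Am: "A \<alpha> ft \<in> sets borel" using A_meas D by auto
  show ?thesis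
  proof (cases "\<alpha> = 1")
    case True
    have "\<not> x \<le> posterior f0 f1 \<alpha> ft s" for s using post_one[of ft s] xg True by simp
    then have "A \<alpha> ft = {}" unfolding A_def by simp
    then have "vote_prob f0 f1 fth x \<alpha> ft = 0" unfolding vp_conv by simp
    then show ?thesis using pHpos by simp
  next
    case False
    then have a1: "\<alpha> < 1" using a by simp
    have AinB: "ss \<le> s \<and> \<alpha> * ft s \<le> (1 - \<alpha>) * kd s" if s: "s \<in> A \<alpha> ft" for s
    proof -
      have "0 \<le> (1 - 2 * x) * (\<alpha> * ft s - (1 - \<alpha>) * kd s)"
        using s post_iff[of \<alpha> ft s] a a1 D(2)[of s] unfolding A_def by simp
      then have le: "\<alpha> * ft s \<le> (1 - \<alpha>) * kd s" using xg by (simp add: zero_le_mult_iff)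
      have "ss \<le> s"
      proof (rule ccontr)
        assume "\<not> ss \<le> s"
        then have "kd s < 0" using kd_neg_H by simp
        then have "(1 - \<alpha>) * kd s < 0" using a1 by (simp add: mult_pos_neg)
        moreover have "0 \<le> \<alpha> * ft s" using a D(2)[of s] by simp
        ultimately show False using le by simp
      qed
      with le show ?thesis by simp
    qed
    define W where "W = integral\<^sup>L lborel (\<lambda>s. indicator (A \<alpha> ft) s * fth s)"
    define Z where "Z = integral\<^sup>L lborel (\<lambda>s. indicator (A \<alpha> ft) s * ft s)"
    define KA where "KA = integral\<^sup>L lborel (\<lambda>s. indicator (A \<alpha> ft) s * kd s)"
    have iW: "integrable lborel (\<lambda>s. indicator (A \<alpha> ft) s * fth s)" by (rule int_ind[OF Am F(3)])
    have iZ: "integrable lborel (\<lambda>s. indicator (A \<alpha> ft) s * ft s)" by (rule int_ind[OF Am D(3)])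
    have iKA: "integrable lborel (\<lambda>s. indicator (A \<alpha> ft) s * kd s)" by (rule int_ind[OF Am intkd])
    have iP: "integrable lborel (\<lambda>s. indicator {ss..} s * fth s)" by (rule int_ind[OF _ F(3)]) simp
    have iK: "integrable lborel (\<lambda>s. indicator {ss..} s * kd s)" by (rule int_ind[OF _ intkd]) simp
    have vp: "vote_prob f0 f1 fth x \<alpha> ft = (1 - \<alpha>) * W + \<alpha> * Z"
    proof -
      have "vote_prob f0 f1 fth x \<alpha> ft = integral\<^sup>L lborel (\<lambda>s. (1 - \<alpha>) * (indicator (A \<alpha> ft) s * fth s) + \<alpha> * (indicator (A \<alpha> ft) s * ft s))"
        unfolding vp_conv by (rule Bochner_Integration.integral_cong) (auto simp: algebra_simps)
      also have "\<dots> = (1 - \<alpha>) * W + \<alpha> * Z" unfolding W_def Z_def using iW iZ by simp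
      finally show ?thesis .
    qed
    have WP: "W \<le> PP fth" unfolding W_def PP_def
      using AinB F(2) by (intro integral_mono iW iP) (auto simp: indicator_def less_imp_le)
    have Z1: "Z \<le> 1" unfolding Z_def using D(4) D(2)
      by (subst D(4)[symmetric], intro integral_mono iZ D(3)) (auto simp: indicator_def)
    have Z0: "0 \<le> Z" unfolding Z_def using D(2)
      by (intro integral_nonneg_AE) (auto simp: indicator_def)
    have ZK: "\<alpha> * Z \<le> (1 - \<alpha>) * KA"
    proof -
      have "\<alpha> * Z = integral\<^sup>L lborel (\<lambda>s. \<alpha> * (indicator (A \<alpha> ft) s * ft s))" unfolding Z_def by simp
      also have "\<dots> \<le> integral\<^sup>L lborel (\<lambda>s. (1 - \<alpha>) * (indicator (A \<alpha> ft) s * kd s))"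
        using AinB iZ iKA by (intro integral_mono) (auto simp: indicator_def)
      also have "\<dots> = (1 - \<alpha>) * KA" unfolding KA_def by simp
      finally show ?thesis .
    qed
    have KAK: "KA \<le> -1 - k" unfolding KA_def K_eq[symmetric]
      using AinB kd_nn_H by (intro integral_mono iKA iK) (auto simp: indicator_def)
    have pHK: "pH fth = (1 - aH) * (PP fth + (-1 - k))"
      by (simp only: pH_def distrib_left aH_props(4)[symmetric])
    consider "\<alpha> < aH" | "aH < \<alpha>" | "\<alpha> = aH" by linarith
    then show ?thesis
    proof cases
      case 1
      have "vote_prob f0 f1 fth x \<alpha> ft \<le> (1 - \<alpha>) * PP fth + \<alpha>"
      proof -
        have "(1 - \<alpha>) * W \<le> (1 - \<alpha>) * PP fth" by (rule mult_left_mono[OF WP]) (use a1 in simp)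
        moreover have "\<alpha> * Z \<le> \<alpha> * 1" by (rule mult_left_mono[OF Z1]) (use a in simp)
        ultimately show ?thesis unfolding vp by simp
      qed
      also have "\<dots> < pH fth"
      proof -
        have "0 < (aH - \<alpha>) * (1 - PP fth)" using 1 P by simp
        then show ?thesis unfolding pH_def by (simp add: algebra_simps)
      qed
      finally show ?thesis using 1 by simp
    next
      case 2
      have "vote_prob f0 f1 fth x \<alpha> ft \<le> (1 - \<alpha>) * (PP fth + (-1 - k))"
        unfolding vp using WP ZK KAK a a1 mult_left_mono[OF WP, of "1 - \<alpha>"] mult_left_mono[OF KAK, of "1 - \<alpha>"]
        by (simp add: algebra_simps)
      also have "\<dots> < pH fth" unfolding pHK using 2 P K_pos
        by (intro mult_strict_right_mono) auto
      finally show ?thesis using 2 by simp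
    next
      case 3
      have le1: "(1 - \<alpha>) * W \<le> (1 - aH) * PP fth" using 3 a1 mult_left_mono[OF WP, of "1 - \<alpha>"] by simp
      have le2: "\<alpha> * Z \<le> aH" using 3 Z1 aH_props mult_left_mono[OF Z1, of \<alpha>] by simp
      have "vote_prob f0 f1 fth x \<alpha> ft \<le> pH fth" unfolding vp pH_def using le1 le2 by simp
      moreover have "AE s in lborel. ft s = gH s" if eq: "vote_prob f0 f1 fth x \<alpha> ft = pH fth"
      proof -
        have "\<alpha> * Z = aH" using eq le1 le2 unfolding vp pH_def by simp
        then have Zeq: "Z = 1" using 3 aH_props by simp
        define h2 where "h2 s = gH s - indicator (A \<alpha> ft) s * ft s" for s
        have h2nn: "0 \<le> h2 s" for s
        proof (cases "s \<in> A \<alpha> ft")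
          case True
          then have "aH * ft s \<le> aH * gH s" using AinB[OF True] gH_key[of s] 3 by simp
          then show ?thesis unfolding h2_def using True aH_props by simp
        next
          case False then show ?thesis unfolding h2_def using gH_nonneg by simp
        qed
        have ih2: "integrable lborel h2" unfolding h2_def[abs_def]
          by (rule Bochner_Integration.integrable_diff[OF gH_int iZ])
        have "integral\<^sup>L lborel h2 = 0" unfolding h2_def[abs_def]
          using gH_tot Zeq gH_int iZ unfolding Z_def by (simp add: Bochner_Integration.integral_diff)
        then have AE2: "AE s in lborel. h2 s = 0"
          using integral_nonneg_eq_0_iff_AE[OF ih2] h2nn by simp
        define h3 where "h3 s = indicator (- A \<alpha> ft) s * ft s" for s
        have ih3: "integrable lborel h3" unfolding h3_def[abs_def]
          by (rule int_ind[OF _ D(3)]) (simp add: borel_comp Am)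
        have "integral\<^sup>L lborel h3 = integral\<^sup>L lborel (\<lambda>s. ft s - indicator (A \<alpha> ft) s * ft s)"
          unfolding h3_def by (rule Bochner_Integration.integral_cong) (auto simp: indicator_def)
        also have "\<dots> = 0" using D(3,4) iZ Zeq unfolding Z_def by (simp add: Bochner_Integration.integral_diff)
        finally have "integral\<^sup>L lborel h3 = 0" .
        moreover have "AE s in lborel. 0 \<le> h3 s" unfolding h3_def using D(2) by (auto simp: indicator_def)
        ultimately have AE3: "AE s in lborel. h3 s = 0"
          using integral_nonneg_eq_0_iff_AE[OF ih3] by simp
        from AE2 AE3 show ?thesis
        proof eventually_elim
          fix s assume "h2 s = 0" "h3 s = 0"
          then show "ft s = gH s" unfolding h2_def h3_def by (cases "s \<in> A \<alpha> ft") auto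
        qed
      qed
      ultimately show ?thesis using 3 by simp
    qed
  qed
qed

end

end

theorem proposition1:
  fixes f0 f1 :: "real \<Rightarrow> real" and x :: real
  assumes cont0: "continuous_on UNIV f0" and cont1: "continuous_on UNIV f1"
    and pos0: "\<And>s. f0 s > 0" and pos1: "\<And>s. f1 s > 0"
    and int0: "integrable lborel f0" and int1: "integrable lborel f1"
    and tot0: "integral\<^sup>L lborel f0 = 1" and tot1: "integral\<^sup>L lborel f1 = 1"
    and eq0: "f0 0 = f1 0"
    and mlr: "strict_mono (\<lambda>s. f1 s / f0 s)"
    and sstar_ex: "\<exists>s. f1 s / f0 s = x / (1 - x)"
    and x: "x \<in> {0<..<1/2} \<union> {1/2<..<1}"
  shows
   "(x < 1/2 \<longrightarrow>
      (let s' = sstar f0 f1 x; k = kappa f0 f1 x s'; a = k / (k + 1);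
           g = (\<lambda>s. if s < s' then (1 - a) / a * kappa' f0 f1 x s else 0) in
        (\<forall>\<alpha> ft. optimal_choice f0 f1 x \<alpha> ft \<longleftrightarrow>
           (is_density ft \<and> \<alpha> = a \<and> (AE s in lborel. ft s = g s))) \<and>
        (\<forall>s\<le>s'. posterior f0 f1 a g s = x)))
    \<and>
    (x > 1/2 \<longrightarrow>
      (let s' = sstar f0 f1 x; k = kappa f0 f1 x s'; a = (k + 1) / k;
           g = (\<lambda>s. if s < s' then 0 else (1 - a) / a * kappa' f0 f1 x s) in
        (\<forall>\<alpha> ft. optimal_choice f0 f1 x \<alpha> ft \<longleftrightarrow>
           (is_density ft \<and> \<alpha> = a \<and> (AE s in lborel. ft s = g s))) \<and>
        (\<forall>s\<ge>s'. posterior f0 f1 a g s = x)))"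
proof -
  interpret troll f0 f1 x
    using cont0 cont1 pos0 pos1 int0 int1 tot0 tot1 mlr sstar_ex x
    by unfold_locales auto
  have ssE: "sstar f0 f1 x = ss" by (simp add: ss_def)
  have kkE: "kappa f0 f1 x ss = k" by (simp add: k_def)
  have f01: "f0 = f0 \<or> f0 = f1" "f1 = f0 \<or> f1 = f1" by auto
  show ?thesis
  proof (intro conjI impI)
    assume xl: "x < 1/2"
    have aaE: "k / (k + 1) = aL" by (simp add: aL_def)
    have ggE: "\<And>s. (if s < ss then (1 - aL) / aL * kappa' f0 f1 x s else 0) = gL s"
      by (simp add: gL_def kappa'_eq indicator_def)
    have q: "vote_prob f0 f1 f0 x aL gL = 1" "vote_prob f0 f1 f1 x aL gL = 1"
      by (rule fullL[OF xl f01(1) gL_dens[OF xl]], simp) (rule fullL[OF xl f01(2) gL_dens[OF xl]], simp)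
    show "let s' = sstar f0 f1 x; k = kappa f0 f1 x s'; a = k / (k + 1);
           g = (\<lambda>s. if s < s' then (1 - a) / a * kappa' f0 f1 x s else 0) in
        (\<forall>\<alpha> ft. optimal_choice f0 f1 x \<alpha> ft \<longleftrightarrow>
           (is_density ft \<and> \<alpha> = a \<and> (AE s in lborel. ft s = g s))) \<and>
        (\<forall>s\<le>s'. posterior f0 f1 a g s = x)"
      unfolding Let_def ssE kkE aaE ggE
    proof (intro conjI allI impI)
      fix s assume "s \<le> ss" then show "posterior f0 f1 aL gL s = x" by (rule post_gL_eq[OF xl])
    next
      fix \<alpha> ft
      show "optimal_choice f0 f1 x \<alpha> ft \<longleftrightarrow> (is_density ft \<and> \<alpha> = aL \<and> (AE s in lborel. ft s = gL s))"
      proof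
        assume opt: "optimal_choice f0 f1 x \<alpha> ft"
        then have adm: "admissible \<alpha> ft" and np: "\<not> sender_prefers f0 f1 x aL gL \<alpha> ft"
          unfolding optimal_choice_def using gL_adm[OF xl] by blast+
        have p: "vote_prob f0 f1 f0 x \<alpha> ft \<le> 1" "vote_prob f0 f1 f1 x \<alpha> ft \<le> 1"
          using vp_le1[OF f01(1) adm] vp_le1[OF f01(2) adm] by auto
        have "vote_prob f0 f1 f0 x \<alpha> ft = 1 \<and> \<alpha> \<le> aL"
          using dom_helper[OF p np[unfolded sender_prefers_def Let_def q]]
          by simp
        then have e1: "vote_prob f0 f1 f0 x \<alpha> ft = 1" and e2: "\<alpha> \<le> aL" by blast+
        have L: "aL \<le> \<alpha> \<and> (\<alpha> \<le> aL \<longrightarrow> \<alpha> = aL \<and> (AE s in lborel. ft s = gL s))"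
          by (rule lbL[OF xl adm e1])
        have d: "is_density ft" using adm unfolding admissible_def by blast
        show "is_density ft \<and> \<alpha> = aL \<and> (AE s in lborel. ft s = gL s)"
          using L e2 d by blast
      next
        assume R: "is_density ft \<and> \<alpha> = aL \<and> (AE s in lborel. ft s = gL s)"
        then have d: "is_density ft" and ea: "\<alpha> = aL" and ae: "AE s in lborel. ft s = gL s" by blast+
        have adm: "admissible \<alpha> ft" unfolding admissible_def using d ea aL_props[OF xl] by simp
        have v: "vote_prob f0 f1 f0 x \<alpha> ft = 1" "vote_prob f0 f1 f1 x \<alpha> ft = 1"
          using fullL[OF xl f01(1) d ae] fullL[OF xl f01(2) d ae] ea by simp_all
        have "\<not> sender_prefers f0 f1 x \<alpha>' ft' \<alpha> ft" if adm': "admissible \<alpha>' ft'" for \<alpha>' ft'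
        proof
          assume sp: "sender_prefers f0 f1 x \<alpha>' ft' \<alpha> ft"
          have p: "vote_prob f0 f1 f0 x \<alpha>' ft' \<le> 1" "vote_prob f0 f1 f1 x \<alpha>' ft' \<le> 1"
            using vp_le1[OF f01(1) adm'] vp_le1[OF f01(2) adm'] by auto
          have "vote_prob f0 f1 f0 x \<alpha>' ft' = 1 \<and> \<alpha>' < \<alpha>"
            using dom_helper2[OF p sp[unfolded sender_prefers_def Let_def v]]
            by simp
          then have e1: "vote_prob f0 f1 f0 x \<alpha>' ft' = 1" and e2: "\<alpha>' < aL" using ea by simp_all
          have "aL \<le> \<alpha>'" using lbL[OF xl adm' e1] by blast
          then show False using e2 by simp
        qed
        then show "optimal_choice f0 f1 x \<alpha> ft" unfolding optimal_choice_def using adm by blast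
      qed
    qed
  next
    assume xg: "1/2 < x"
    have aaE: "(k + 1) / k = aH" by (simp add: aH_def)
    have ggE: "\<And>s. (if s < ss then 0 else (1 - aH) / aH * kappa' f0 f1 x s) = gH s"
      by (simp add: gH_def kappa'_eq indicator_def)
    have q: "vote_prob f0 f1 f0 x aH gH = pH f0" "vote_prob f0 f1 f1 x aH gH = pH f1"
      by (rule vp_gH[OF xg f01(1) gH_dens[OF xg]], simp) (rule vp_gH[OF xg f01(2) gH_dens[OF xg]], simp)
    show "let s' = sstar f0 f1 x; k = kappa f0 f1 x s'; a = (k + 1) / k;
           g = (\<lambda>s. if s < s' then 0 else (1 - a) / a * kappa' f0 f1 x s) in
        (\<forall>\<alpha> ft. optimal_choice f0 f1 x \<alpha> ft \<longleftrightarrow>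
           (is_density ft \<and> \<alpha> = a \<and> (AE s in lborel. ft s = g s))) \<and>
        (\<forall>s\<ge>s'. posterior f0 f1 a g s = x)"
      unfolding Let_def ssE kkE aaE ggE
    proof (intro conjI allI impI)
      fix s assume "ss \<le> s" then show "posterior f0 f1 aH gH s = x" by (rule post_gH_eq[OF xg])
    next
      fix \<alpha> ft
      show "optimal_choice f0 f1 x \<alpha> ft \<longleftrightarrow> (is_density ft \<and> \<alpha> = aH \<and> (AE s in lborel. ft s = gH s))"
      proof
        assume opt: "optimal_choice f0 f1 x \<alpha> ft"
        then have adm: "admissible \<alpha> ft" and np: "\<not> sender_prefers f0 f1 x aH gH \<alpha> ft"
          unfolding optimal_choice_def using gH_adm[OF xg] by blast+
        have p0: "vote_prob f0 f1 f0 x \<alpha> ft \<le> pH f0" by (rule conjunct1[OF ubH[OF xg f01(1) adm]])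
        have p1: "vote_prob f0 f1 f1 x \<alpha> ft \<le> pH f1" by (rule conjunct1[OF ubH[OF xg f01(2) adm]])
        have e1: "vote_prob f0 f1 f1 x \<alpha> ft = pH f1"
          using dom_helper[OF p0 p1 np[unfolded sender_prefers_def Let_def q]]
          by simp
        have U: "\<alpha> = aH \<and> (AE s in lborel. ft s = gH s)"
          using conjunct2[OF ubH[OF xg f01(2) adm]] e1 by blast
        have d: "is_density ft" using adm unfolding admissible_def by blast
        show "is_density ft \<and> \<alpha> = aH \<and> (AE s in lborel. ft s = gH s)"
          using U d by blast
      next
        assume R: "is_density ft \<and> \<alpha> = aH \<and> (AE s in lborel. ft s = gH s)"
        then have d: "is_density ft" and ea: "\<alpha> = aH" and ae: "AE s in lborel. ft s = gH s" by blast+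
        have adm: "admissible \<alpha> ft" unfolding admissible_def using d ea aH_props[OF xg] by simp
        have v: "vote_prob f0 f1 f0 x \<alpha> ft = pH f0" "vote_prob f0 f1 f1 x \<alpha> ft = pH f1"
          using vp_gH[OF xg f01(1) d ae] vp_gH[OF xg f01(2) d ae] ea by simp_all
        have "\<not> sender_prefers f0 f1 x \<alpha>' ft' \<alpha> ft" if adm': "admissible \<alpha>' ft'" for \<alpha>' ft'
        proof
          assume sp: "sender_prefers f0 f1 x \<alpha>' ft' \<alpha> ft"
          have p0: "vote_prob f0 f1 f0 x \<alpha>' ft' \<le> pH f0" by (rule conjunct1[OF ubH[OF xg f01(1) adm']])
          have p1: "vote_prob f0 f1 f1 x \<alpha>' ft' \<le> pH f1" by (rule conjunct1[OF ubH[OF xg f01(2) adm']])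
          have "vote_prob f0 f1 f1 x \<alpha>' ft' = pH f1 \<and> \<alpha>' < \<alpha>"
            using dom_helper2[OF p0 p1 sp[unfolded sender_prefers_def Let_def v]]
            by simp
          then have e1: "vote_prob f0 f1 f1 x \<alpha>' ft' = pH f1" and e2: "\<alpha>' < aH" using ea by simp_all
          have "\<alpha>' = aH" using conjunct2[OF ubH[OF xg f01(2) adm']] e1 by blast
          then show False using e2 by simp
        qed
        then show "optimal_choice f0 f1 x \<alpha> ft" unfolding optimal_choice_def using adm by blast
      qed
    qed
  qed
qed

end
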